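(* Let $2\le r_1<r_2$ be integers and let $T=[h,q_1,q_2]\in\mathfrak{F}(n)$. For an integer $j\ge 3$, let $T_j$ be the starlike tree consisting of a central vertex to which $r_2$ pendant paths with $2$ edges each and one pendant path with $j$ edges are attached. Then $\rho(T)>\rho(T_j)$.
   Context: $\rho(G)$ denotes the spectral radius (largest eigenvalue of the adjacency matrix) of a graph $G$. For integers $h,q_1,q_2\ge 2$ and fixed integers $2\le r_1<r_2$, the tree $[h,q_1,q_2]$ is constructed as follows: take a vertex $u$; attach to $u$ a pendant path with $h$ edges; attach to $u$ a path with $q_1$ edges ending at a vertex $v_1$, and attach to $v_1$ exactly $r_1$ pendant paths with $2$ edges each; attach to $u$ a path with $q_2$ edges ending at a vertex $v_2$, and attach to $v_2$ exactly $r_2$ pendant paths with $2$ edges each. It has $n=1+h+q_1+q_2+2(r_1+r_2)$ vertices. $\mathfrak{F}(n)$ is the set of all such trees $[h,q_1,q_2]$ with $h,q_1,q_2\ge2$ and $h+q_1+q_2=n-1-2(r_1+r_2)$ (for the fixed $r_1,r_2$). *)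

theory Defs
  imports "Jordan_Normal_Form.Char_Poly"
begin

text \<open>A finite simple graph on vertex set {0..<N} is given by N and a set E of
  (unordered, stored as ordered pairs) edges.\<close>

definition adj_matrix :: "nat \<Rightarrow> (nat \<times> nat) set \<Rightarrow> real mat" where
  "adj_matrix N E = mat N N (\<lambda>(i, j). if i \<noteq> j \<and> ((i, j) \<in> E \<or> (j, i) \<in> E) then 1 else 0)"

text \<open>Spectral radius = largest eigenvalue of the (real symmetric) adjacency matrix.\<close>
definition rho :: "nat \<Rightarrow> (nat \<times> nat) set \<Rightarrow> real" where
  "rho N E = Max {k. eigenvalue (adj_matrix N E) k}"

definition pend :: "nat \<Rightarrow> nat \<Rightarrow> nat \<Rightarrow> (nat \<times> nat) set" where
  "pend a f len = (if len = 0 then {} else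
      insert (a, f) {(f + k, f + k + 1) | k. k + 1 < len})"

text \<open>The tree [h,q1,q2] (with parameters r1, r2): u = 0, pendant path 1..h,
  path to v1 = h+q1, r1 pendant 2-paths at v1, path to v2 = s+q2-1 where
  s = h+q1+1+2 r1, r2 pendant 2-paths at v2.\<close>
definition tree_F_verts :: "nat \<Rightarrow> nat \<Rightarrow> nat \<Rightarrow> nat \<Rightarrow> nat \<Rightarrow> nat" where
  "tree_F_verts r1 r2 h q1 q2 = 1 + h + q1 + q2 + 2 * (r1 + r2)"

definition tree_F_edges :: "nat \<Rightarrow> nat \<Rightarrow> nat \<Rightarrow> nat \<Rightarrow> nat \<Rightarrow> (nat \<times> nat) set" where
  "tree_F_edges r1 r2 h q1 q2 =
     (let v1 = h + q1; s = h + q1 + 1 + 2 * r1; v2 = s + q2 - 1 in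
      pend 0 1 h \<union> pend 0 (h + 1) q1
      \<union> (\<Union>i<r1. pend v1 (v1 + 1 + 2 * i) 2)
      \<union> pend 0 s q2
      \<union> (\<Union>i<r2. pend v2 (v2 + 1 + 2 * i) 2))"

definition star_T_verts :: "nat \<Rightarrow> nat \<Rightarrow> nat" where
  "star_T_verts r2 j = 1 + 2 * r2 + j"

definition star_T_edges :: "nat \<Rightarrow> nat \<Rightarrow> (nat \<times> nat) set" where
  "star_T_edges r2 j = (\<Union>i<r2. pend 0 (1 + 2 * i) 2) \<union> pend 0 (1 + 2 * r2) j"

end

theory Submission
  imports Defs "Jordan_Normal_Form.Spectral_Radius"
begin



lemma mv_sum: "A \<in> carrier_mat n n \<Longrightarrow> i < n \<Longrightarrow> (A *\<^sub>v vec n f) $ i = (\<Sum>j<n. A $$ (i,j) * f j)"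
  by (auto simp: scalar_prod_def row_def atLeast0LessThan intro!: sum.cong)

lemma mv_sum': "A \<in> carrier_mat n n \<Longrightarrow> v \<in> carrier_vec n \<Longrightarrow> i < n \<Longrightarrow> (A *\<^sub>v v) $ i = (\<Sum>j<n. A $$ (i,j) * v $ j)"
  by (auto simp: scalar_prod_def row_def atLeast0LessThan intro!: sum.cong)

lemma collatz:
  fixes A :: "real mat"
  assumes A: "A \<in> carrier_mat n n" and nn: "\<And>i j. i<n \<Longrightarrow> j<n \<Longrightarrow> 0 \<le> A$$(i,j)"
   and ypos: "\<And>i. i<n \<Longrightarrow> 0 < y i" and sup: "\<And>i. i<n \<Longrightarrow> (A *\<^sub>v vec n y)$i \<le> lam * y i"
   and ev: "eigenvalue A k"
  shows "\<bar>k\<bar> \<le> lam"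
proof -
  from ev A obtain v where v: "v \<in> carrier_vec n" "v \<noteq> 0\<^sub>v n" "A *\<^sub>v v = k \<cdot>\<^sub>v v"
    unfolding eigenvalue_def eigenvector_def by auto
  define f where "f j = \<bar>v$j\<bar> / y j" for j
  have "\<exists>j<n. v$j \<noteq> 0"
  proof (rule ccontr)
    assume "\<not> ?thesis"
    hence "v = 0\<^sub>v n" using v(1) by (intro eq_vecI) auto
    with v(2) show False by simp
  qed
  then obtain j0 where j0: "j0 < n" "v$j0 \<noteq> 0" by auto
  have fin: "finite (f ` {..<n})" and ne: "f ` {..<n} \<noteq> {}" using j0 by auto
  obtain i where i: "i < n" "f i = Max (f ` {..<n})" using Max_in[OF fin ne] by auto
  have fmax: "f j \<le> f i" if "j < n" for j using i Max_ge[OF fin] that by auto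
  have "f j0 > 0" using j0 ypos unfolding f_def by auto
  hence fi: "f i > 0" using fmax[OF j0(1)] by auto
  have vi: "\<bar>v$i\<bar> = f i * y i" using ypos[OF i(1)] unfolding f_def by auto
  have "\<bar>k\<bar> * \<bar>v$i\<bar> = \<bar>(A *\<^sub>v v)$i\<bar>" using v i by (simp add: abs_mult)
  also have "(A *\<^sub>v v)$i = (\<Sum>j<n. A $$ (i,j) * v $ j)" using mv_sum'[OF A v(1) i(1)] .
  also have "\<bar>\<dots>\<bar> \<le> (\<Sum>j<n. \<bar>A $$ (i,j) * v $ j\<bar>)" by (rule sum_abs)
  also have "\<dots> \<le> (\<Sum>j<n. A $$ (i,j) * (f i * y j))"
  proof (rule sum_mono)
    fix j assume j: "j \<in> {..<n}"
    have "\<bar>v$j\<bar> = f j * y j" using ypos[of j] j unfolding f_def by auto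
    also have "\<dots> \<le> f i * y j" using fmax[of j] ypos[of j] j by (auto intro: mult_right_mono)
    finally show "\<bar>A $$ (i,j) * v $ j\<bar> \<le> A $$ (i,j) * (f i * y j)"
      using nn[OF i(1), of j] j by (auto simp: abs_mult intro: mult_left_mono)
  qed
  also have "\<dots> = f i * (A *\<^sub>v vec n y)$i" unfolding mv_sum[OF A i(1)]
    by (simp add: sum_distrib_left algebra_simps)
  also have "\<dots> \<le> f i * (lam * y i)" using sup[OF i(1)] fi by auto
  also have "\<dots> = lam * \<bar>v$i\<bar>" using vi by simp
  finally have "\<bar>k\<bar> * \<bar>v$i\<bar> \<le> lam * \<bar>v$i\<bar>" .
  moreover have "\<bar>v$i\<bar> > 0" using vi fi ypos[OF i(1)] by auto
  ultimately show ?thesis by auto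
qed

lemma nonzero_vec_ex: "v \<in> carrier_vec n \<Longrightarrow> v \<noteq> 0\<^sub>v n \<Longrightarrow> \<exists>j<n. v$j \<noteq> 0"
  by (metis carrier_vecD eq_vecI index_zero_vec(1) index_zero_vec(2))

lemma sym_eig_real:
  fixes M :: "real mat"
  assumes M: "M \<in> carrier_mat n n" and sym: "\<And>i j. i<n \<Longrightarrow> j<n \<Longrightarrow> M$$(i,j) = M$$(j,i)"
   and ev: "eigenvalue (map_mat complex_of_real M) e"
  shows "Im e = 0"
proof -
  let ?C = "map_mat complex_of_real M"
  have C: "?C \<in> carrier_mat n n" using M by auto
  from ev C obtain v where v: "v \<in> carrier_vec n" "v \<noteq> 0\<^sub>v n" "?C *\<^sub>v v = e \<cdot>\<^sub>v v"
    unfolding eigenvalue_def eigenvector_def by auto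
  define S where "S = (\<Sum>i<n. cnj (v$i) * (?C *\<^sub>v v)$i)"
  define D where "D = (\<Sum>i<n. (cmod (v$i))^2)"
  have "S = (\<Sum>i<n. e * (v$i * cnj (v$i)))" unfolding S_def using v
    by (intro sum.cong) (auto simp: algebra_simps)
  also have "\<dots> = (\<Sum>i<n. e * of_real ((cmod (v$i))^2))"
    by (intro sum.cong refl, subst complex_norm_square) simp
  also have "\<dots> = e * of_real D" unfolding D_def of_real_sum sum_distrib_left ..
  finally have S1: "S = e * of_real D" .
  have S2: "S = (\<Sum>i<n. \<Sum>j<n. cnj (v$i) * of_real (M$$(i,j)) * v$j)"
    unfolding S_def using M v
    by (intro sum.cong refl, subst mv_sum'[OF C v(1)]) (auto simp: sum_distrib_left mult.assoc)
  have "cnj S = (\<Sum>i<n. \<Sum>j<n. v$i * of_real (M$$(i,j)) * cnj (v$j))"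
    unfolding S2 by (simp add: cnj_sum)
  also have "\<dots> = (\<Sum>j<n. \<Sum>i<n. v$i * of_real (M$$(i,j)) * cnj (v$j))"
    by (rule sum.swap)
  also have "\<dots> = S" unfolding S2 using sym
    by (intro sum.cong refl) (auto simp: algebra_simps)
  finally have "cnj S = S" .
  hence ImS: "Im S = 0" by (metis Reals_cnj_iff complex_is_Real_iff)
  obtain j where j: "j < n" "v$j \<noteq> 0" using nonzero_vec_ex[OF v(1,2)] by auto
  have "D \<ge> (cmod (v$j))^2" unfolding D_def
    by (rule member_le_sum) (use j in auto)
  moreover have "(cmod (v$j))^2 > 0" using j by auto
  ultimately have "D > 0" by linarith
  from ImS S1 have "Im e * D = 0" by simp
  with \<open>D > 0\<close> show ?thesis by simp
qed

lemma real_eig_of_complex: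
  fixes M :: "real mat"
  assumes M: "M \<in> carrier_mat n n" and ev: "eigenvalue (map_mat complex_of_real M) (complex_of_real r)"
  shows "eigenvalue M r"
proof -
  have C: "map_mat complex_of_real M \<in> carrier_mat n n" using M by auto
  have "poly (char_poly (map_mat complex_of_real M)) (complex_of_real r) = 0"
    using ev eigenvalue_root_char_poly[OF C] by auto
  hence "complex_of_real (poly (char_poly M) r) = 0"
    unfolding of_real_hom.char_poly_hom[OF M] of_real_hom.poly_map_poly .
  hence "poly (char_poly M) r = 0" by simp
  thus ?thesis using eigenvalue_root_char_poly[OF M] by auto
qed

lemma pow_mat_Suc_left: assumes A: "A \<in> carrier_mat n n"
  shows "A ^\<^sub>m Suc k = A * A ^\<^sub>m k"
proof (induct k)
  case 0 thus ?case using A by simp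
next
  case (Suc k)
  have "A ^\<^sub>m Suc (Suc k) = (A * A ^\<^sub>m k) * A" using Suc by simp
  also have "\<dots> = A * (A ^\<^sub>m k * A)" using A by (intro assoc_mult_mat) auto
  finally show ?case by simp
qed

lemma perron_lower:
  fixes A :: "real mat"
  assumes A: "A \<in> carrier_mat n n" and nn: "\<And>i j. i<n \<Longrightarrow> j<n \<Longrightarrow> 0 \<le> A$$(i,j)"
   and sym: "\<And>i j. i<n \<Longrightarrow> j<n \<Longrightarrow> A$$(i,j) = A$$(j,i)"
   and xnn: "\<And>i. i<n \<Longrightarrow> 0 \<le> x i" and i0: "i0 < n" "0 < x i0"
   and sub: "\<And>i. i<n \<Longrightarrow> mu * x i \<le> (A *\<^sub>v vec n x)$i" and mu: "0 < mu"
  shows "\<exists>k. eigenvalue A k \<and> mu \<le> k"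
proof (rule ccontr)
  assume neg: "\<not> ?thesis"
  hence lt: "\<And>k. eigenvalue A k \<Longrightarrow> k < mu" by force
  define c where "c = (\<Sum>i<n. \<Sum>j<n. A$$(i,j))"
  have rowsum: "(A *\<^sub>v vec n (\<lambda>_. 1))$i \<le> c * 1" if i: "i<n" for i
  proof -
    have "(A *\<^sub>v vec n (\<lambda>_. 1))$i = (\<Sum>j<n. A$$(i,j))" using mv_sum[OF A i] by simp
    also have "\<dots> \<le> c" unfolding c_def
      by (rule member_le_sum[of i _ "\<lambda>i. \<Sum>j<n. A$$(i,j)"]) (use i nn in \<open>auto intro: sum_nonneg\<close>)
    finally show ?thesis by simp
  qed
  have cb: "\<bar>k\<bar> \<le> c" if "eigenvalue A k" for k
    by (rule collatz[OF A nn _ rowsum that]) auto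
  have c0: "0 \<le> c" unfolding c_def using nn by (auto intro!: sum_nonneg)
  define E where "E = {k. eigenvalue A k}"
  have finE: "finite E" using card_finite_spectrum(1)[OF A] unfolding E_def spectrum_def .
  define m0 where "m0 = Max (insert (-c) E)"
  have m0ge: "-c \<le> m0" "\<And>k. k\<in>E \<Longrightarrow> k \<le> m0" unfolding m0_def using finE by auto
  have "m0 \<in> insert (-c) E" unfolding m0_def using finE by (intro Max_in) auto
  hence m0lt: "m0 < mu" using lt c0 mu unfolding E_def by auto
  define nu where "nu = (m0 + mu)/2 + c"
  have nu1: "nu > m0 + c" "nu < mu + c" "nu > 0" using m0lt m0ge(1) unfolding nu_def by (auto simp: field_simps)
  define M where "M = mat n n (\<lambda>(i,j). (A$$(i,j) + (if i = j then c else 0)) / nu)"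
  have M: "M \<in> carrier_mat n n" unfolding M_def by auto
  have Mnn: "0 \<le> M$$(i,j)" if "i<n" "j<n" for i j
    using that nn[OF that] c0 nu1 unfolding M_def by auto
  have Msym: "M$$(i,j) = M$$(j,i)" if "i<n" "j<n" for i j
    using that sym[OF that] unfolding M_def by auto
  have Mv: "(M *\<^sub>v v)$i = ((A *\<^sub>v v)$i + c * v$i)/nu" if v: "v \<in> carrier_vec n" and i: "i<n" for v i
  proof -
    have "(M *\<^sub>v v)$i = (\<Sum>j<n. A$$(i,j) * v$j / nu + (if i = j then c * v$j / nu else 0))"
      unfolding mv_sum'[OF M v i] using i by (intro sum.cong refl) (auto simp: M_def add_divide_distrib algebra_simps)
    also have "\<dots> = (\<Sum>j<n. A$$(i,j) * v$j) / nu + c * v$i / nu"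
      using i by (simp add: sum.distrib sum_divide_distrib)
    finally show ?thesis unfolding mv_sum'[OF A v i] by (simp add: add_divide_distrib)
  qed
  have eigM: "0 \<le> r \<and> r < 1" if ev: "eigenvalue M r" for r
  proof -
    from ev M obtain v where v: "v \<in> carrier_vec n" "v \<noteq> 0\<^sub>v n" "M *\<^sub>v v = r \<cdot>\<^sub>v v"
      unfolding eigenvalue_def eigenvector_def by auto
    have "A *\<^sub>v v = (nu * r - c) \<cdot>\<^sub>v v"
    proof (rule eq_vecI)
      fix i assume "i < dim_vec ((nu * r - c) \<cdot>\<^sub>v v)"
      hence i: "i < n" using v by auto
      have "r * v$i = ((A *\<^sub>v v)$i + c * v$i)/nu" using Mv[OF v(1) i] v(3) i v(1)
        by (metis carrier_vecD index_smult_vec(1))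
      thus "(A *\<^sub>v v)$i = ((nu * r - c) \<cdot>\<^sub>v v)$i" using nu1 i v(1) by (auto simp: field_simps)
    qed (use v A in auto)
    hence eA: "eigenvalue A (nu * r - c)" using v A unfolding eigenvalue_def eigenvector_def by auto
    from cb[OF eA] have "0 \<le> nu * r" by auto
    hence r0: "0 \<le> r" using nu1 by (simp add: zero_le_mult_iff)
    from m0ge(2)[of "nu * r - c"] eA have "nu * r - c \<le> m0" unfolding E_def by auto
    hence "nu * r < nu * 1" using nu1 by linarith
    hence "r < 1" using nu1 mult_less_cancel_left_pos by blast
    with r0 show ?thesis by auto
  qed
  let ?MC = "map_mat complex_of_real M"
  have MC: "?MC \<in> carrier_mat n n" using M by auto
  have n0: "n > 0" using i0 by auto
  have sr: "spectral_radius ?MC < 1"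
  proof -
    from spectral_radius_mem_max(1)[OF MC n0] obtain e where e: "eigenvalue ?MC e"
      and sre: "spectral_radius ?MC = norm e" unfolding spectrum_def by auto
    have "Im e = 0" by (rule sym_eig_real[OF M Msym e])
    hence ee: "e = complex_of_real (Re e)" by (simp add: complex_eq_iff)
    have "eigenvalue M (Re e)" by (rule real_eig_of_complex[OF M]) (use e ee in simp)
    from eigM[OF this] have "norm e < 1" by (subst ee) simp
    thus ?thesis using sre by simp
  qed
  from spectral_radius_jnf_norm_bound_less_1_upper_triangular[OF MC sr]
  obtain C where C: "\<And>k. norm_bound (?MC ^\<^sub>m k) C" by auto
  have bnd: "\<bar>(M ^\<^sub>m k)$$(i,j)\<bar> \<le> C" if "i<n" "j<n" for k i j
  proof -
    have "?MC ^\<^sub>m k = map_mat complex_of_real (M ^\<^sub>m k)"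
      by (metis of_real_hom.mat_hom_pow M)
    with C[of k] that M have "norm (complex_of_real ((M ^\<^sub>m k)$$(i,j))) \<le> C"
      unfolding norm_bound_def by auto
    thus ?thesis by simp
  qed
  define rho where "rho = (mu + c)/nu"
  have rho1: "rho > 1" unfolding rho_def using nu1 by auto
  have Mx: "rho * x i \<le> (M *\<^sub>v vec n x)$i" if i: "i<n" for i
  proof -
    have "rho * x i = (mu * x i + c * x i)/nu" unfolding rho_def by (simp add: field_simps)
    also have "\<dots> \<le> ((A *\<^sub>v vec n x)$i + c * x i)/nu"
      using sub[OF i] nu1 by (intro divide_right_mono) auto
    finally show ?thesis using Mv[of "vec n x" i] i by simp
  qed
  have pw: "rho^k * x i \<le> (M ^\<^sub>m k *\<^sub>v vec n x)$i" if "i<n" for k i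
    using that
  proof (induct k arbitrary: i)
    case 0
    have "(M ^\<^sub>m 0 *\<^sub>v vec n x) = vec n x" using M by auto
    thus ?case using 0 by simp
  next
    case (Suc k)
    let ?w = "M ^\<^sub>m k *\<^sub>v vec n x"
    have Pk: "M ^\<^sub>m k \<in> carrier_mat n n" using M by (rule pow_carrier_mat)
    have w: "?w \<in> carrier_vec n" using Pk by (rule mult_mat_vec_carrier) simp
    have eq: "M ^\<^sub>m Suc k *\<^sub>v vec n x = M *\<^sub>v ?w"
      unfolding pow_mat_Suc_left[OF M] by (rule assoc_mult_mat_vec[OF M Pk]) simp
    have "(M ^\<^sub>m Suc k *\<^sub>v vec n x)$i = (\<Sum>j<n. M$$(i,j) * ?w$j)"
      unfolding eq by (rule mv_sum'[OF M w Suc(2)])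
    also have "\<dots> \<ge> (\<Sum>j<n. M$$(i,j) * (rho^k * x j))"
    proof (rule sum_mono)
      fix j assume j: "j \<in> {..<n}"
      hence jn: "j < n" by simp
      have "rho^k * x j \<le> ?w$j" using Suc(1)[OF jn] .
      thus "M$$(i,j) * (rho^k * x j) \<le> M$$(i,j) * ?w$j"
        using Mnn[OF Suc(2) jn] by (rule mult_left_mono)
    qed
    also have "(\<Sum>j<n. M$$(i,j) * (rho^k * x j)) = rho^k * (M *\<^sub>v vec n x)$i"
      unfolding mv_sum[OF M Suc(2)] by (simp add: sum_distrib_left algebra_simps)
    finally have 1: "(M ^\<^sub>m Suc k *\<^sub>v vec n x)$i \<ge> rho^k * (M *\<^sub>v vec n x)$i" .
    have 2: "rho^k * (M *\<^sub>v vec n x)$i \<ge> rho^k * (rho * x i)"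
      using Mx[OF Suc(2)] rho1 by (intro mult_left_mono) auto
    have 3: "rho^Suc k * x i = rho^k * (rho * x i)" by simp
    show ?case using 1 2 unfolding 3 by linarith
  qed
  have up: "(M ^\<^sub>m k *\<^sub>v vec n x)$i0 \<le> C * (\<Sum>j<n. x j)" for k
  proof -
    have P: "M ^\<^sub>m k \<in> carrier_mat n n" using M by auto
    have "(M ^\<^sub>m k *\<^sub>v vec n x)$i0 = (\<Sum>j<n. (M ^\<^sub>m k)$$(i0,j) * x j)" using mv_sum[OF P i0(1)] .
    also have "\<dots> \<le> (\<Sum>j<n. C * x j)"
    proof (rule sum_mono)
      fix j assume j: "j \<in> {..<n}"
      have "(M ^\<^sub>m k)$$(i0,j) \<le> C" using bnd[OF i0(1), of j k] j by auto
      thus "(M ^\<^sub>m k)$$(i0,j) * x j \<le> C * x j" using xnn[of j] j by (auto intro: mult_right_mono)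
    qed
    finally show ?thesis by (simp add: sum_distrib_left)
  qed
  obtain k where k: "C * (\<Sum>j<n. x j) / x i0 < rho ^ k" using real_arch_pow[OF rho1] by blast
  hence "C * (\<Sum>j<n. x j) < rho ^ k * x i0" using i0 by (simp add: field_simps)
  with pw[OF i0(1), of k] up[of k] show False by linarith
qed




lemma l1: "(s::real) * u = 1 \<Longrightarrow> a*s^2 - b*u^2 + (a-b) = (s+u)*(a*s^1 - b*u^1)" for a b :: real
proof -
  assume su: "s*u = 1"
  have "(s+u)*(a*s^1 - b*u^1) = a*s^2 - b*u^2 + a*(s*u) - b*(s*u)" by (simp add: algebra_simps power2_eq_square)
  thus ?thesis using su by simp
qed
lemma l2: "a*s^3 - b*u^3 - (s+u)*(a-b) = a * (s^3 - s - u) + b * (s + u - u^3)" for a b u s :: real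
  by (simp add: algebra_simps)
lemma l3: "(s::real)^4 = s^2 * s^2" by (simp add: power_add[symmetric])
lemma l4: "(s::real) * u = 1 \<Longrightarrow> s * (s^3 - s - u) = s^4 - s^2 - 1"
proof -
  assume su: "s*u = 1"
  have "s * (s^3 - s - u) = s^4 - s^2 - s*u" by (simp add: algebra_simps power2_eq_square power3_eq_cube power4_eq_xxxx)
  thus ?thesis using su by simp
qed
lemma l5: "(t::real) * u = 1 \<Longrightarrow> t * (a*t^3 - b*u^3 - (t+u)*(a-b)) - (a*t^4 - b*u^4 - (t+u)*(a*t^1 - b*u^1))
        = b * ((t^2 - 1) + (1 - u^2)^2)" for a b :: real
proof -
  assume tu: "t*u = 1"
  have "t * (a*t^3 - b*u^3 - (t+u)*(a-b)) - (a*t^4 - b*u^4 - (t+u)*(a*t^1 - b*u^1))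
      = b * (t^2 - u^2 + u^4 - (t*u)*u^2)" by (simp add: algebra_simps power2_eq_square power3_eq_cube power4_eq_xxxx)
  also have "\<dots> = b * ((t^2 - 1) + (1 - u^2)^2)" using tu by (simp add: algebra_simps power2_eq_square power4_eq_xxxx)
  finally show ?thesis .
qed
lemma l6: "(u::real)^2 * t^2 = (t*u)^2" by (simp add: power_mult_distrib)
lemma l7: "(t::real)^4 = (t^2)^2" by (simp add: power_mult[symmetric])
lemma l8: "(t::real) * u^3 = (t*u)*u^2" by (simp add: power2_eq_square power3_eq_cube)
lemma l9: "(t::real)^2 = w \<Longrightarrow> t^4 = w^2 \<Longrightarrow> t * u^3 = u^2 \<Longrightarrow> r * (t^2 - u^2) - t * (t^3 - u^3) = r*w - r*u^2 - w^2 + u^2"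
proof -
  assume a: "t^2 = w" "t^4 = w^2" "t * u^3 = u^2"
  have "t * t^3 = t^4" by (simp add: power3_eq_cube power4_eq_xxxx)
  hence "r * (t^2 - u^2) - t * (t^3 - u^3) = r*t^2 - r*u^2 - t^4 + t*u^3" by (simp add: algebra_simps)
  thus ?thesis using a by simp
qed
lemma l10: "(u::real)^2 * w = 1 \<Longrightarrow> r*w - r*u^2 - w^2 + u^2 = (u^2 - 1) * (w^2 - (r-1)*w - (r-1))"
proof -
  assume a: "u^2 * w = 1"
  have "(u^2 - 1) * (w^2 - (r-1)*w - (r-1)) = w*(u^2*w) - (r-1)*(u^2*w) - (r-1)*u^2 - w^2 + (r-1)*w + (r-1)"
    by (simp add: algebra_simps power2_eq_square)
  also have "\<dots> = r*w - r*u^2 - w^2 + u^2" unfolding a by (simp add: algebra_simps)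
  finally show ?thesis by simp
qed
lemma l11: "(q::real)^2 = d^2 + 4*d \<Longrightarrow> 2*w = d+q \<Longrightarrow> w^2 = d*w + d"
proof -
  assume a: "q^2 = d^2 + 4*d" "2*w = d+q"
  have "4 * w^2 = (2*w)^2" by (simp add: power2_eq_square)
  also have "\<dots> = d^2 + 2*d*q + q^2" unfolding a(2) by (simp add: power2_eq_square algebra_simps)
  also have "\<dots> = 2*d*(d+q) + 4*d" unfolding a(1) by (simp add: power2_eq_square algebra_simps)
  also have "\<dots> = 4*(d*w + d)" unfolding a(2)[symmetric] by (simp add: algebra_simps)
  finally show ?thesis by simp
qed

definition Pf :: "real \<Rightarrow> nat \<Rightarrow> real" where "Pf s k = s^k - (1/s)^k"
definition Zf :: "real \<Rightarrow> nat \<Rightarrow> real" where "Zf s k = Pf s (k+3) - (s + 1/s) * Pf s k"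

lemma Pf_add: "Pf s (k+m) = s^k * s^m - (1/s)^k * (1/s)^m"
  unfolding Pf_def power_add ..

lemma Pf_rec: assumes "s > 0" shows "Pf s (k+2) + Pf s k = (s + 1/s) * Pf s (k+1)"
proof -
  define u where "u = 1/s"
  have su: "s * u = 1" using assms unfolding u_def by simp
  have "a*s^2 - b*u^2 + (a-b) = (s+u)*(a*s^1 - b*u^1)" for a b :: real using su by (rule l1)
  thus ?thesis unfolding Pf_add unfolding Pf_def u_def[symmetric] by simp
qed

lemma Zf_rec: assumes s: "s > 0" shows "Zf s (k+2) + Zf s k = (s + 1/s) * Zf s (k+1)"
proof -
  have 1: "Pf s (k+5) + Pf s (k+3) = (s + 1/s) * Pf s (k+4)" using Pf_rec[OF s, of "k+3"] by (simp add: add.commute)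
  have 2: "Pf s (k+2) + Pf s k = (s + 1/s) * Pf s (k+1)" using Pf_rec[OF s, of k] by (simp add: add.commute)
  have "Zf s (k+2) + Zf s k = (Pf s (k+5) + Pf s (k+3)) - (s + 1/s) * (Pf s (k+2) + Pf s k)"
    unfolding Zf_def by (simp add: algebra_simps)
  also have "\<dots> = (s + 1/s) * Zf s (k+1)" unfolding 1 2 Zf_def by (simp add: algebra_simps)
  finally show ?thesis .
qed

lemma Pf_12: "s > 0 \<Longrightarrow> Pf s 2 = (s + 1/s) * Pf s 1"
  using Pf_rec[of s 0] by (simp add: Pf_def power2_eq_square)
lemma Pf_123: "s > 0 \<Longrightarrow> Pf s 3 + Pf s 1 = (s + 1/s) * Pf s 2"
  using Pf_rec[of s 1] by (simp add: numeral_eq_Suc)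
lemma Zf_0: "Zf s 0 = Pf s 3" by (simp add: Zf_def Pf_def)
lemma Zf_1: "s > 0 \<Longrightarrow> Zf s 1 + 2 * Pf s 2 = (s + 1/s) * Zf s 0"
proof -
  assume s: "s > 0"
  have "Zf s 1 = Pf s 4 - Pf s 2" unfolding Zf_def using Pf_12[OF s] by simp
  moreover have "Pf s 4 + Pf s 2 = (s + 1/s) * Pf s 3" using Pf_rec[of s 2] s by (simp add: numeral_eq_Suc)
  ultimately show ?thesis unfolding Zf_0 by simp
qed

lemma Pf_pos: "s > 1 \<Longrightarrow> k \<ge> 1 \<Longrightarrow> Pf s k > 0"
proof -
  assume s: "s > 1" and k: "k \<ge> 1"
  have "(1/s)^k < 1" using s k by (simp add: power_less_one_iff)
  moreover have "1 \<le> s^k" using s by simp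
  ultimately show ?thesis unfolding Pf_def by simp
qed

lemma Zf_expand: "Zf s k = s^k * (s^3 - s - 1/s) + (1/s)^k * (s + 1/s - (1/s)^3)"
proof -
  have "a*s^3 - b*u^3 - (s+u)*(a-b) = a * (s^3 - s - u) + b * (s + u - u^3)" for a b u :: real
    by (rule l2)
  thus ?thesis unfolding Zf_def Pf_add unfolding Pf_def by simp
qed

lemma Zf_pos: assumes s: "s > 1" "s^2 \<ge> 2" shows "Zf s k > 0"
proof -
  define u where "u = 1/s"
  have s0: "s > 0" using s by simp
  have su: "s * u = 1" using s0 unfolding u_def by simp
  have u1: "u < 1" "u > 0" using s unfolding u_def by auto
  have "s^4 = s^2 * s^2" by (rule l3)
  also have "\<dots> \<ge> 2 * s^2" using s(2) by (intro mult_right_mono) auto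
  finally have s4: "s^4 - s^2 - 1 > 0" using s(2) by linarith
  have "s * (s^3 - s - u) = s^4 - s^2 - 1" using su by (rule l4)
  hence "s * (s^3 - s - u) > 0" using s4 by simp
  hence a: "s^3 - s - u > 0" using s0 by (simp add: zero_less_mult_iff)
  have "u^3 \<le> u" using u1 by (metis less_imp_le power_le_one_iff power_one_right
      power_decreasing one_le_numeral)
  hence b: "s + u - u^3 > 0" using s0 by simp
  show ?thesis unfolding Zf_expand u_def[symmetric] using a b s0 u1
    by (intro add_pos_pos mult_pos_pos) auto
qed

lemma tZ: assumes t: "t > 1" shows "t * Zf t k > Zf t (k+1)"
proof -
  define u where "u = 1/t"
  have t0: "t > 0" using t by simp
  have tu: "t * u = 1" using t0 unfolding u_def by simp
  have u1: "u < 1" "u > 0" using t unfolding u_def by auto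
  have id: "t * (a*t^3 - b*u^3 - (t+u)*(a-b)) - (a*t^4 - b*u^4 - (t+u)*(a*t^1 - b*u^1))
        = b * ((t^2 - 1) + (1 - u^2)^2)" for a b :: real using tu by (rule l5)
  have e1: "Zf t k = t^k*t^3 - u^k*u^3 - (t+u)*(t^k-u^k)"
    unfolding Zf_def unfolding Pf_add unfolding Pf_def u_def ..
  have "Zf t (k+1) = Pf t (k+4) - (t+1/t) * Pf t (k+1)" by (simp add: Zf_def add.commute)
  hence e2: "Zf t (k+1) = t^k*t^4 - u^k*u^4 - (t+u)*(t^k*t^1-u^k*u^1)"
    unfolding Pf_add unfolding u_def .
  have e: "t * Zf t k - Zf t (k+1) = u^k * ((t^2 - 1) + (1 - u^2)^2)"
    unfolding e1 e2 by (rule id)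
  have "t^2 > 1" using t by (simp add: one_less_power)
  hence "t * Zf t k - Zf t (k+1) > 0" unfolding e using u1
    by (intro mult_pos_pos) (auto intro: add_pos_nonneg)
  thus ?thesis by simp
qed

lemma choose_t: fixes r :: real assumes r: "r \<ge> 3"
  obtains t where "t > 1" "t^2 \<ge> 2" "r * Pf t 2 = t * Pf t 3"
proof -
  define d where "d = r - 1"
  define q where "q = sqrt (d^2 + 4*d)"
  define w where "w = (d + q)/2"
  define t where "t = sqrt w"
  define u where "u = 1/t"
  have d2: "d \<ge> 2" using r unfolding d_def by simp
  have qq: "q^2 = d^2 + 4*d" unfolding q_def using d2 by simp
  have "q \<ge> sqrt (d^2)" unfolding q_def using d2 by (intro real_sqrt_le_mono) auto
  hence qd: "q \<ge> d" using d2 by simp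
  have w2: "w \<ge> 2" unfolding w_def using qd d2 by simp
  have tw: "t^2 = w" unfolding t_def using w2 by simp
  have t1: "t > 1" unfolding t_def using w2 by simp
  have tu: "t * u = 1" unfolding u_def using t1 by simp
  have w2d: "2*w = d+q" unfolding w_def by simp
  have ww: "w^2 = d*w + d" using qq w2d by (rule l11)
  have "u^2 * t^2 = (t*u)^2" by (rule l6)
  hence u2w: "u^2 * w = 1" using tw tu by simp
  have "t^4 = (t^2)^2" by (rule l7)
  hence t4: "t^4 = w^2" using tw by simp
  have "t * u^3 = (t*u)*u^2" by (rule l8)
  hence tu3: "t * u^3 = u^2" using tu by simp
  have e1: "r * (t^2 - u^2) - t * (t^3 - u^3) = r*w - r*u^2 - w^2 + u^2"
    using tw t4 tu3 by (rule l9)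
  have e2: "r*w - r*u^2 - w^2 + u^2 = (u^2 - 1) * (w^2 - d*w - d)" using u2w unfolding d_def by (rule l10)
  have "r * (t^2 - u^2) = t * (t^3 - u^3)" using e1 e2 ww by simp
  hence "r * Pf t 2 = t * Pf t 3" unfolding Pf_def u_def .
  with t1 tw w2 show ?thesis using that by auto
qed

lemma exists_right: fixes F :: "real \<Rightarrow> real" assumes c: "isCont F t" and p: "F t > 0"
  obtains s where "s > t" "F s > 0"
proof -
  have "(F \<longlongrightarrow> F t) (at_right t)" using c unfolding isCont_def filterlim_at_split by simp
  from order_tendstoD(1)[OF this p] have "eventually (\<lambda>s. F s > 0) (at_right t)" .
  then obtain b where b: "b > t" "\<And>y. y > t \<Longrightarrow> y < b \<Longrightarrow> F y > 0"
    unfolding eventually_at_right_field by auto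
  show ?thesis using that[of "(t+b)/2"] b by auto
qed

lemma phi_cont: "t > 0 \<Longrightarrow> isCont (\<lambda>s. r * Pf s 2 * Zf s q - Pf s 3 * Zf s (q+1)) t"
  unfolding Zf_def Pf_def by (intro continuous_intros) auto




definition adjp :: "(nat \<times> nat) set \<Rightarrow> nat \<Rightarrow> nat \<Rightarrow> bool" where
  "adjp E i j \<longleftrightarrow> i \<noteq> j \<and> ((i,j) \<in> E \<or> (j,i) \<in> E)"

lemma adj_carrier: "adj_matrix N E \<in> carrier_mat N N"
  unfolding adj_matrix_def by simp

lemma adj_entry: "i<N \<Longrightarrow> j<N \<Longrightarrow> adj_matrix N E $$ (i,j) = (if adjp E i j then 1 else 0)"
  unfolding adj_matrix_def adjp_def by simp

lemma adj_nn: "i<N \<Longrightarrow> j<N \<Longrightarrow> 0 \<le> adj_matrix N E $$ (i,j)"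
  by (simp add: adj_entry)

lemma adj_sym: "i<N \<Longrightarrow> j<N \<Longrightarrow> adj_matrix N E $$ (i,j) = adj_matrix N E $$ (j,i)"
  by (auto simp: adj_entry adjp_def)

lemma adj_mv: "i < N \<Longrightarrow> (adj_matrix N E *\<^sub>v vec N f)$i = (\<Sum>j<N. if adjp E i j then f j else 0)"
proof -
  assume i: "i < N"
  have "(adj_matrix N E *\<^sub>v vec N f)$i = (\<Sum>j<N. adj_matrix N E $$ (i,j) * f j)"
    by (rule mv_sum[OF adj_carrier i])
  also have "\<dots> = (\<Sum>j<N. if adjp E i j then f j else 0)"
    by (intro sum.cong refl) (use i in \<open>simp add: adj_entry\<close>)
  finally show ?thesis .
qed

lemma adj_lower:
  assumes i: "i < N" and Nb: "Nb \<subseteq> {..<N}" and adj: "\<And>j. j \<in> Nb \<Longrightarrow> adjp E i j"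
    and nn: "\<And>j. j < N \<Longrightarrow> 0 \<le> f j"
  shows "sum f Nb \<le> (adj_matrix N E *\<^sub>v vec N f)$i"
proof -
  have "sum f Nb = (\<Sum>j\<in>Nb. if adjp E i j then f j else 0)" using adj by simp
  also have "\<dots> \<le> (\<Sum>j<N. if adjp E i j then f j else 0)"
    by (rule sum_mono2) (use Nb nn in auto)
  finally show ?thesis unfolding adj_mv[OF i] .
qed

lemma adj_upper:
  assumes i: "i < N" and fin: "finite Nb" and adj: "\<And>j. j < N \<Longrightarrow> adjp E i j \<Longrightarrow> j \<in> Nb"
    and nn: "\<And>j. j \<in> Nb \<Longrightarrow> 0 \<le> f j"
  shows "(adj_matrix N E *\<^sub>v vec N f)$i \<le> sum f Nb"
proof -
  have "(\<Sum>j<N. if adjp E i j then f j else 0) = sum f {j\<in>{..<N}. adjp E i j}"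
    using sum.inter_filter[of "{..<N}" f "adjp E i"] by simp
  also have "\<dots> \<le> sum f Nb" by (rule sum_mono2[OF fin]) (use adj nn in auto)
  finally show ?thesis unfolding adj_mv[OF i] .
qed

lemma star_edge:
  assumes "(a,b) \<in> star_T_edges r2 j"
  shows "1 \<le> b \<and> ((a = 0 \<and> odd b \<and> b \<le> 1 + 2*r2) \<or> (b = a+1 \<and> odd a \<and> a < 2*r2) \<or> (b = a+1 \<and> a \<ge> 1 + 2*r2))"
  using assms unfolding star_T_edges_def pend_def
  by (auto split: if_splits)



lemma Tj_upper:
  fixes r2 j :: nat and t k :: real
  assumes t: "t > 1" and c: "real r2 * Pf t 2 \<le> t * Pf t 3"
    and ev: "eigenvalue (adj_matrix (star_T_verts r2 j) (star_T_edges r2 j)) k"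
  shows "k \<le> t + 1/t"
proof -
  define N where "N = star_T_verts r2 j"
  define E where "E = star_T_edges r2 j"
  have N: "N = 1 + 2*r2 + j" unfolding N_def star_T_verts_def ..
  define u where "u = 1/t"
  have u: "u > 0" "t * u = 1" using t unfolding u_def by auto
  define P1 where "P1 = Pf t 1"
  define P2 where "P2 = Pf t 2"
  define P3 where "P3 = Pf t 3"
  have P: "P1 > 0" "P2 > 0" "P3 > 0" unfolding P1_def P2_def P3_def using Pf_pos[OF t] by auto
  have P12: "P2 = (t + u) * P1" unfolding P1_def P2_def u_def using Pf_12 t by simp
  have P123: "P3 + P1 = (t + u) * P2" unfolding P1_def P2_def P3_def u_def using Pf_123 t by simp
  define y where "y i = (if i = 0 then 1 else if i \<le> 2*r2 then (if odd i then P2/P3 else P1/P3) else u^(i - 2*r2))" for i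
  have ypos: "0 < y i" for i unfolding y_def using P u by auto
  have yge: "0 \<le> y i" for i using ypos[of i] by simp
  have sup: "(adj_matrix N E *\<^sub>v vec N y)$i \<le> (t + 1/t) * y i" if i: "i<N" for i
  proof -
    have cases: "i = 0 \<or> (1 \<le> i \<and> i \<le> 2*r2 \<and> odd i) \<or> (1 \<le> i \<and> i \<le> 2*r2 \<and> even i) \<or> i > 2*r2"
      by auto
    moreover
    {
      assume i0: "i = 0"
      define Nb where "Nb = insert (1+2*r2) ((\<lambda>a. 1+2*a) ` {..<r2})"
      have adj: "jj \<in> Nb" if "jj < N" "adjp E i jj" for jj
      proof -
        from that(2) i0 have "(0,jj) \<in> E \<or> (jj,0) \<in> E" unfolding adjp_def by auto
        hence "odd jj \<and> jj \<le> 1 + 2*r2" using star_edge[of _ _ r2 j] unfolding E_def by fastforce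
        hence "jj = 1 + 2*r2 \<or> (\<exists>a<r2. jj = 1 + 2*a)" by presburger
        thus ?thesis unfolding Nb_def by auto
      qed
      have "(adj_matrix N E *\<^sub>v vec N y)$i \<le> sum y Nb"
        by (rule adj_upper[OF i _ adj yge]) (auto simp: Nb_def)
      also have "sum y Nb = y (1+2*r2) + (\<Sum>a<r2. y (1+2*a))"
        unfolding Nb_def by (subst sum.insert) (auto simp: sum.reindex inj_on_def)
      also have "(\<Sum>a<r2. y (1+2*a)) = (\<Sum>a<r2. P2/P3)"
        by (intro sum.cong refl) (auto simp: y_def)
      also have "y (1+2*r2) = u" unfolding y_def by simp
      finally have 1: "(adj_matrix N E *\<^sub>v vec N y)$i \<le> u + real r2 * (P2/P3)" by simp
      have "real r2 * (P2/P3) \<le> t" using c P unfolding P2_def P3_def by (simp add: field_simps)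
      with 1 have ?thesis using i0 unfolding y_def u_def by simp
    }
    moreover
    {
      assume io: "1 \<le> i \<and> i \<le> 2*r2 \<and> odd i"
      define Nb where "Nb = {0, i+1}"
      have adj: "jj \<in> Nb" if "jj < N" "adjp E i jj" for jj
      proof -
        from that(2) have "(i,jj) \<in> E \<or> (jj,i) \<in> E" unfolding adjp_def by auto
        thus ?thesis
        proof
          assume "(i,jj) \<in> E"
          from star_edge[OF this[unfolded E_def]] io show ?thesis unfolding Nb_def by auto
        next
          assume "(jj,i) \<in> E"
          from star_edge[OF this[unfolded E_def]] io have "jj = 0" by presburger
          thus ?thesis unfolding Nb_def by simp
        qed
      qed
      have "(adj_matrix N E *\<^sub>v vec N y)$i \<le> sum y Nb"
        by (rule adj_upper[OF i _ adj yge]) (auto simp: Nb_def)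
      also have "sum y Nb = 1 + P1/P3"
      proof -
        have "i + 1 \<le> 2*r2" "even (i+1)" using io by presburger+
        thus ?thesis unfolding Nb_def using io by (auto simp: y_def)
      qed
      also have "\<dots> = (t + u) * (P2/P3)" using P123 P by (simp add: field_simps)
      finally have ?thesis using io unfolding y_def u_def by simp
    }
    moreover
    {
      assume ie: "1 \<le> i \<and> i \<le> 2*r2 \<and> even i"
      define Nb where "Nb = {i - 1}"
      have adj: "jj \<in> Nb" if "jj < N" "adjp E i jj" for jj
      proof -
        from that(2) have "(i,jj) \<in> E \<or> (jj,i) \<in> E" unfolding adjp_def by auto
        thus ?thesis
        proof
          assume "(i,jj) \<in> E"
          from star_edge[OF this[unfolded E_def]] ie have False by presburger
          thus ?thesis ..
        next
          assume "(jj,i) \<in> E"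
          from star_edge[OF this[unfolded E_def]] ie have "jj = i - 1" by presburger
          thus ?thesis unfolding Nb_def by simp
        qed
      qed
      have "(adj_matrix N E *\<^sub>v vec N y)$i \<le> sum y Nb"
        by (rule adj_upper[OF i _ adj yge]) (auto simp: Nb_def)
      also have "sum y Nb = P2/P3"
        unfolding Nb_def using ie by (auto simp: y_def)
      also have "\<dots> = (t + u) * (P1/P3)" using P12 P by (simp add: field_simps)
      finally have ?thesis using ie unfolding y_def u_def by auto
    }
    moreover
    {
      assume ib: "i > 2*r2"
      define k where "k = i - 1 - 2*r2"
      have ik: "i = 1 + 2*r2 + k" unfolding k_def using ib by simp
      define Nb where "Nb = {if k = 0 then 0 else i - 1, i+1}"
      have adj: "jj \<in> Nb" if "jj < N" "adjp E i jj" for jj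
      proof -
        from that(2) have "(i,jj) \<in> E \<or> (jj,i) \<in> E" unfolding adjp_def by auto
        thus ?thesis
        proof
          assume "(i,jj) \<in> E"
          from star_edge[OF this[unfolded E_def]] ib show ?thesis unfolding Nb_def by auto
        next
          assume "(jj,i) \<in> E"
          from star_edge[OF this[unfolded E_def]] ib ik show ?thesis unfolding Nb_def by auto
        qed
      qed
      have "(adj_matrix N E *\<^sub>v vec N y)$i \<le> sum y Nb"
        by (rule adj_upper[OF i _ adj yge]) (auto simp: Nb_def)
      also have "sum y Nb = u^k + u^(k+2)"
      proof -
        have "y (if k = 0 then 0 else i - 1) = u^k" using ik by (auto simp: y_def)
        moreover have "y (i+1) = u^(k+2)" using ik by (auto simp: y_def)
        moreover have "(if k = 0 then 0 else i - 1) \<noteq> i + 1" by auto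
        ultimately show ?thesis unfolding Nb_def by simp
      qed
      also have "\<dots> = (t + u) * u^(k+1)"
      proof -
        have "(t+u)*(a*u) = a*(t*u) + a*u^2" for a :: real by (simp add: algebra_simps power2_eq_square)
        hence "a + a*u^2 = (t+u)*(a*u)" for a :: real using u(2) by simp
        moreover have "u^(k+2) = u^k * u^2" "u^(k+1) = u^k * u" by (simp_all only: power_add power_one_right)
        ultimately show ?thesis by metis
      qed
      finally have ?thesis using ik unfolding y_def u_def by auto
    }
    ultimately show ?thesis by blast
  qed
  have "\<bar>k\<bar> \<le> t + 1/t"
    by (rule collatz[OF adj_carrier adj_nn ypos sup ev[folded N_def E_def]])
  thus ?thesis by simp
qed



lemma T_lower:
  fixes r1 r2 h q1 q2 :: nat and s :: real
  assumes h: "2 \<le> h" and q1: "2 \<le> q1" and q2: "2 \<le> q2" and s: "s > 1" "s^2 \<ge> 2"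
   and phi: "Pf s 3 * Zf s (q2+1) \<le> real r2 * Pf s 2 * Zf s q2"
  shows "\<exists>k. eigenvalue (adj_matrix (tree_F_verts r1 r2 h q1 q2) (tree_F_edges r1 r2 h q1 q2)) k \<and> s + 1/s \<le> k"
proof -
  define N where "N = tree_F_verts r1 r2 h q1 q2"
  define E where "E = tree_F_edges r1 r2 h q1 q2"
  define S where "S = h + q1 + 1 + 2*r1"
  define v2 where "v2 = S + q2 - 1"
  have N: "N = v2 + 1 + 2*r2" unfolding N_def v2_def S_def tree_F_verts_def using q2 by simp
  have Sh: "S \<ge> h + 3" unfolding S_def using q1 by simp
  have v2S: "v2 \<ge> S + 1" unfolding v2_def using q2 by simp
  have Eu: "E = pend 0 1 h \<union> pend 0 (h + 1) q1 \<union> (\<Union>i<r1. pend (h+q1) (h+q1 + 1 + 2 * i) 2)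
      \<union> pend 0 S q2 \<union> (\<Union>i<r2. pend v2 (v2 + 1 + 2 * i) 2)"
    unfolding E_def tree_F_edges_def Let_def S_def v2_def ..
  have E01: "(0,1) \<in> E" unfolding Eu pend_def using h by auto
  have E12: "(1,2) \<in> E" unfolding Eu pend_def using h by force
  have E0h: "(0,h+1) \<in> E" unfolding Eu pend_def using q1 by auto
  have Eh: "(h+1,h+2) \<in> E"
  proof -
    have "(h+1,h+2) \<in> pend 0 (h+1) q1" unfolding pend_def using q1 by force
    thus ?thesis unfolding Eu by blast
  qed
  have E0S: "(0,S) \<in> E" unfolding Eu pend_def using q2 by auto
  have ES: "(S+k, S+k+1) \<in> E" if "k+1 < q2" for k
  proof -
    have "(S+k, S+k+1) \<in> pend 0 S q2" unfolding pend_def using that by auto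
    thus ?thesis unfolding Eu by blast
  qed
  have Ev: "(v2, v2+1+2*a) \<in> E" if "a < r2" for a
  proof -
    have "(v2, v2+1+2*a) \<in> pend v2 (v2+1+2*a) 2" unfolding pend_def by auto
    thus ?thesis unfolding Eu using that by blast
  qed
  have Ev2: "(v2+1+2*a, v2+2+2*a) \<in> E" if "a < r2" for a
  proof -
    have "(v2+1+2*a, v2+2+2*a) \<in> pend v2 (v2+1+2*a) 2" unfolding pend_def by force
    thus ?thesis unfolding Eu using that by blast
  qed
  define mu where "mu = s + 1/s"
  have s0: "s > 0" using s by simp
  define P1 where "P1 = Pf s 1"
  define P2 where "P2 = Pf s 2"
  define P3 where "P3 = Pf s 3"
  define Z where "Z = Zf s"
  have P: "P1 > 0" "P2 > 0" "P3 > 0" unfolding P1_def P2_def P3_def using Pf_pos[OF s(1)] by auto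
  have Zp: "Z k > 0" for k unfolding Z_def using Zf_pos[OF s] .
  have P12: "P2 = mu * P1" unfolding P1_def P2_def mu_def using Pf_12 s0 by simp
  have P123: "P3 + P1 = mu * P2" unfolding P1_def P2_def P3_def mu_def using Pf_123 s0 by simp
  have Z0: "Z 0 = P3" unfolding Z_def P3_def by (rule Zf_0)
  have Z1: "Z 1 + 2 * P2 = mu * P3" unfolding Z_def P2_def mu_def using Zf_1[OF s0] Zf_0 P3_def by simp
  have Zr: "Z (k+2) + Z k = mu * Z (k+1)" for k unfolding Z_def mu_def using Zf_rec[OF s0] .
  define g where "g = Z q2 / P3"
  have g: "g > 0" unfolding g_def using Zp P by simp
  have gP3: "g * P3 = Z q2" unfolding g_def using P by simp
  define x where "x i = (if i = 0 then P3 else if i = 1 \<or> i = h+1 then P2 else if i = 2 \<or> i = h+2 then P1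
     else if S \<le> i \<and> i \<le> v2 then Z (i+1-S) else if v2 < i \<and> i < N then (if odd (i - v2) then g*P2 else g*P1) else 0)" for i
  have xnn: "0 \<le> x i" for i unfolding x_def using P g Zp by (auto intro: less_imp_le)
  have x0: "x 0 = P3" unfolding x_def by simp
  have x1: "x 1 = P2" unfolding x_def by simp
  have x2: "x 2 = P1" unfolding x_def using h by simp
  have xh1: "x (h+1) = P2" unfolding x_def by simp
  have xh2: "x (h+2) = P1" unfolding x_def using h by simp
  have xp: "x i = Z (i+1-S)" if "S \<le> i" "i \<le> v2" for i unfolding x_def using that Sh by auto
  have xo: "x (v2+1+2*a) = g*P2" if "a < r2" for a unfolding x_def using that N v2S Sh by auto
  have xe: "x (v2+2+2*a) = g*P1" if "a < r2" for a unfolding x_def using that N v2S Sh by auto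
  let ?A = "adj_matrix N E"
  have L: "mu * x i \<le> (?A *\<^sub>v vec N x)$i"
    if "i < N" "Nb \<subseteq> {..<N}" "\<And>j. j \<in> Nb \<Longrightarrow> adjp E i j" "mu * x i \<le> sum x Nb" for i Nb
  proof -
    have "sum x Nb \<le> (?A *\<^sub>v vec N x)$i" by (rule adj_lower) (use that xnn in auto)
    thus ?thesis using that(4) by linarith
  qed
  have sub: "mu * x i \<le> (?A *\<^sub>v vec N x)$i" if i: "i < N" for i
  proof -
    have "i \<le> v2 \<or> (\<exists>a<r2. i = v2+1+2*a) \<or> (\<exists>a<r2. i = v2+2+2*a)" using i N by presburger
    moreover have "i = 0 \<or> i = 1 \<or> i = 2 \<or> i = h+1 \<or> i = h+2 \<or> (S \<le> i \<and> i < v2) \<or> i = v2 \<or> x i = 0"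
      if "i \<le> v2" using that unfolding x_def by auto
    ultimately consider "i = 0" | "i = 1" | "i = 2" | "i = h+1" | "i = h+2" | "S \<le> i \<and> i < v2" | "i = v2"
      | "x i = 0" | "\<exists>a<r2. i = v2+1+2*a" | "\<exists>a<r2. i = v2+2+2*a" by blast
    thus ?thesis
    proof cases
      case 1
      show ?thesis
      proof (rule L[OF i, of "{1, h+1, S}"])
        show "{1, h+1, S} \<subseteq> {..<N}" using N v2S Sh by auto
        show "adjp E i j" if "j \<in> {1, h+1, S}" for j
          using that 1 E01 E0h E0S h Sh unfolding adjp_def by auto
        have "sum x {1, h+1, S} = P2 + P2 + Z 1"
          using h Sh x1 xh1 xp[of S] v2S by simp
        thus "mu * x i \<le> sum x {1, h+1, S}" using 1 x0 Z1 by simp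
      qed
    next
      case 2
      show ?thesis
      proof (rule L[OF i, of "{0, 2}"])
        show "{0, 2} \<subseteq> {..<N}" using N v2S Sh h by auto
        show "adjp E i j" if "j \<in> {0, 2}" for j
          using that 2 E01 E12 unfolding adjp_def by auto
        show "mu * x i \<le> sum x {0, 2}" using 2 x0 x1 x2 P123 by simp
      qed
    next
      case 3
      show ?thesis
      proof (rule L[OF i, of "{1}"])
        show "{1} \<subseteq> {..<N}" using N v2S Sh h by auto
        show "adjp E i j" if "j \<in> {1}" for j
          using that 3 E12 unfolding adjp_def by auto
        show "mu * x i \<le> sum x {1}" using 3 x1 x2 P12 by simp
      qed
    next
      case 4
      show ?thesis
      proof (rule L[OF i, of "{0, h+2}"])
        show "{0, h+2} \<subseteq> {..<N}" using N v2S Sh h by auto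
        show "adjp E i j" if "j \<in> {0, h+2}" for j
          using that 4 E0h Eh unfolding adjp_def by auto
        show "mu * x i \<le> sum x {0, h+2}" using 4 x0 xh1 xh2 P123 by simp
      qed
    next
      case 5
      show ?thesis
      proof (rule L[OF i, of "{h+1}"])
        show "{h+1} \<subseteq> {..<N}" using N v2S Sh h by auto
        show "adjp E i j" if "j \<in> {h+1}" for j
          using that 5 Eh unfolding adjp_def by auto
        show "mu * x i \<le> sum x {h+1}" using 5 xh1 xh2 P12 by simp
      qed
    next
      case 6
      define m where "m = i - S"
      have im: "i = S + m" and mq: "m + 1 < q2" using 6 unfolding m_def v2_def by auto
      define pv where "pv = (if m = 0 then 0 else i - 1)"
      have xpv: "x pv = Z m"
      proof (cases "m = 0")
        case True thus ?thesis unfolding pv_def using x0 Z0 by simp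
      next
        case False thus ?thesis unfolding pv_def using xp[of "i-1"] im 6 by simp
      qed
      have xi: "x i = Z (m+1)" using xp[of i] 6 im by simp
      have xn: "x (i+1) = Z (m+2)" using xp[of "i+1"] 6 im by simp
      show ?thesis
      proof (rule L[OF i, of "{pv, i+1}"])
        show "{pv, i+1} \<subseteq> {..<N}" using N 6 i unfolding pv_def by auto
        show "adjp E i j" if "j \<in> {pv, i+1}" for j
        proof -
          have a1: "adjp E i (i+1)" using ES[OF mq] im unfolding adjp_def by simp
          have a2: "adjp E i pv"
          proof (cases "m = 0")
            case True thus ?thesis unfolding pv_def adjp_def using E0S im Sh by auto
          next
            case False
            have "(S + (m-1), S + (m-1) + 1) \<in> E" using ES[of "m-1"] mq by simp
            thus ?thesis unfolding pv_def adjp_def using False im by auto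
          qed
          show ?thesis using that a1 a2 by auto
        qed
        have "pv \<noteq> i+1" unfolding pv_def by auto
        hence "sum x {pv, i+1} = Z m + Z (m+2)" using xpv xn by simp
        thus "mu * x i \<le> sum x {pv, i+1}" using xi Zr[of m] by simp
      qed
    next
      case 7
      define Nb where "Nb = insert (v2-1) ((\<lambda>a. v2+1+2*a) ` {..<r2})"
      show ?thesis
      proof (rule L[OF i, of Nb])
        show "Nb \<subseteq> {..<N}" using N unfolding Nb_def by auto
        show "adjp E i j" if "j \<in> Nb" for j
        proof -
          have "(S + (q2-2), S + (q2-2) + 1) \<in> E" using ES[of "q2-2"] q2 by simp
          moreover have "S + (q2-2) = v2 - 1" "S + (q2-2) + 1 = v2" unfolding v2_def using q2 by auto
          ultimately have "(v2-1, v2) \<in> E" by simp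
          thus ?thesis using that 7 Ev v2S unfolding Nb_def adjp_def by auto
        qed
        have "sum x Nb = x (v2-1) + (\<Sum>a<r2. x (v2+1+2*a))"
          unfolding Nb_def by (subst sum.insert) (auto simp: sum.reindex inj_on_def)
        also have "(\<Sum>a<r2. x (v2+1+2*a)) = (\<Sum>a<r2. g*P2)" by (rule sum.cong[OF refl], rule xo) simp
        also have "x (v2-1) = Z (q2-1)" using xp[of "v2-1"] v2S unfolding v2_def by simp
        finally have sx: "sum x Nb = Z (q2-1) + real r2 * (g * P2)" by simp
        have "Z (q2+1) \<le> real r2 * (g * P2)"
        proof -
          have "P3 * (real r2 * (g * P2)) = real r2 * P2 * (g * P3)" by (simp add: algebra_simps)
          also have "\<dots> = real r2 * P2 * Z q2" unfolding gP3 ..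
          finally have "P3 * (real r2 * (g * P2)) = real r2 * P2 * Z q2" .
          moreover have "P3 * Z (q2+1) \<le> real r2 * P2 * Z q2"
            using phi unfolding Z_def P2_def P3_def .
          ultimately have "P3 * Z (q2+1) \<le> P3 * (real r2 * (g * P2))" by linarith
          thus ?thesis using P by simp
        qed
        moreover have "Z (q2+1) + Z (q2-1) = mu * Z q2" using Zr[of "q2-1"] q2 by simp
        moreover have "x i = Z q2" using xp[of v2] 7 v2S unfolding v2_def by simp
        hence "mu * x i = mu * Z q2" by simp
        ultimately show "mu * x i \<le> sum x Nb" unfolding sx by linarith
      qed
    next
      case 8
      show ?thesis by (rule L[OF i, of "{}"]) (use 8 in auto)
    next
      case 9
      then obtain a where a: "a < r2" "i = v2+1+2*a" by auto
      show ?thesis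
      proof (rule L[OF i, of "{v2, i+1}"])
        show "{v2, i+1} \<subseteq> {..<N}" using N a by auto
        show "adjp E i j" if "j \<in> {v2, i+1}" for j
          using that a Ev[OF a(1)] Ev2[OF a(1)] unfolding adjp_def by auto
        have "sum x {v2, i+1} = Z q2 + g*P1" using a xp[of v2] v2S xe[OF a(1)] unfolding v2_def by simp
        moreover have "x i = g*P2" using a xo by simp
        moreover have "mu * (g*P2) = Z q2 + g*P1"
        proof -
          have "mu * (g*P2) = g * (mu * P2)" by simp
          also have "\<dots> = g * P3 + g * P1" unfolding P123[symmetric] by (simp add: algebra_simps)
          finally show ?thesis unfolding gP3 .
        qed
        ultimately show "mu * x i \<le> sum x {v2, i+1}" by simp
      qed
    next
      case 10
      then obtain a where a: "a < r2" "i = v2+2+2*a" by auto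
      show ?thesis
      proof (rule L[OF i, of "{i-1}"])
        show "{i-1} \<subseteq> {..<N}" using N a by auto
        show "adjp E i j" if "j \<in> {i-1}" for j
          using that a Ev2[OF a(1)] unfolding adjp_def by auto
        have "sum x {i-1} = g*P2" using a xo by simp
        moreover have "x i = g*P1" using a xe by simp
        ultimately show "mu * x i \<le> sum x {i-1}" using P12 by simp
      qed
    qed
  qed
  have N0: "0 < N" using N by simp
  have "\<exists>k. eigenvalue ?A k \<and> mu \<le> k"
  proof (rule perron_lower[where x = x and n = N and mu = mu])
    show "?A \<in> carrier_mat N N" by (rule adj_carrier)
    show "0 \<le> ?A $$ (i,j)" if "i < N" "j < N" for i j using adj_nn[OF that] .
    show "?A $$ (i,j) = ?A $$ (j,i)" if "i < N" "j < N" for i j using adj_sym[OF that] .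
    show "0 \<le> x i" for i by (rule xnn)
    show "0 < N" by (rule N0)
    show "0 < x 0" using x0 P by simp
    show "mu * x i \<le> (?A *\<^sub>v vec N x)$i" if "i < N" for i using sub[OF that] .
    show "0 < mu" unfolding mu_def using s0 by (simp add: add_pos_pos)
  qed
  thus ?thesis unfolding N_def E_def mu_def .
qed



lemma star_nonempty:
  assumes r2: "r2 > 0"
  shows "\<exists>k. eigenvalue (adj_matrix (star_T_verts r2 j) (star_T_edges r2 j)) k"
proof -
  define N where "N = star_T_verts r2 j"
  define E where "E = star_T_edges r2 j"
  have N: "N = 1 + 2*r2 + j" unfolding N_def star_T_verts_def ..
  have E01: "(0,1) \<in> E" unfolding E_def star_T_edges_def pend_def using r2 by force
  define x where "x i = (if i = 0 \<or> i = 1 then 1 else 0 :: real)" for i :: nat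
  let ?A = "adj_matrix N E"
  have "\<exists>k. eigenvalue ?A k \<and> 1 \<le> k"
  proof (rule perron_lower[where x = x and n = N and mu = 1])
    show "?A \<in> carrier_mat N N" by (rule adj_carrier)
    show "0 \<le> ?A $$ (i,j)" if "i < N" "j < N" for i j using adj_nn[OF that] .
    show "?A $$ (i,j) = ?A $$ (j,i)" if "i < N" "j < N" for i j using adj_sym[OF that] .
    show "0 \<le> x i" for i unfolding x_def by simp
    show "0 < N" using N by simp
    show "0 < x 0" unfolding x_def by simp
    show "1 * x i \<le> (?A *\<^sub>v vec N x)$i" if i: "i < N" for i
    proof (cases "i = 0 \<or> i = 1")
      case True
      define Nb where "Nb = {1 - i}"
      have "sum x Nb \<le> (?A *\<^sub>v vec N x)$i"
        by (rule adj_lower) (use i True E01 N r2 in \<open>auto simp: Nb_def adjp_def x_def\<close>)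
      moreover have "sum x Nb = 1" using True unfolding Nb_def x_def by auto
      moreover have "x i = 1" using True unfolding x_def by auto
      ultimately show ?thesis by simp
    next
      case False
      have "sum x {} \<le> (?A *\<^sub>v vec N x)$i"
        by (rule adj_lower) (use i in \<open>auto simp: x_def\<close>)
      thus ?thesis using False unfolding x_def by simp
    qed
    show "(0::real) < 1" by simp
  qed
  thus ?thesis unfolding N_def E_def by auto
qed

theorem theorem2p1:
  fixes r1 r2 h q1 q2 j :: nat
  assumes "2 \<le> r1" and "r1 < r2"
    and "2 \<le> h" and "2 \<le> q1" and "2 \<le> q2"
    and "3 \<le> j"
  shows "rho (tree_F_verts r1 r2 h q1 q2) (tree_F_edges r1 r2 h q1 q2)
         > rho (star_T_verts r2 j) (star_T_edges r2 j)"
proof -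
  have r2: "real r2 \<ge> 3" using assms(1,2) by simp
  obtain t where t: "t > 1" "t^2 \<ge> 2" "real r2 * Pf t 2 = t * Pf t 3" using choose_t[OF r2] by blast
  define phi where "phi s = real r2 * Pf s 2 * Zf s q2 - Pf s 3 * Zf s (q2+1)" for s
  have "phi t = Pf t 3 * (t * Zf t q2 - Zf t (q2+1))" unfolding phi_def t(3) by (simp add: algebra_simps)
  moreover have "Pf t 3 > 0" using Pf_pos[OF t(1)] by simp
  moreover have "t * Zf t q2 - Zf t (q2+1) > 0" using tZ[OF t(1)] by simp
  ultimately have pt: "phi t > 0" by simp
  have "isCont phi t" unfolding phi_def using t(1) by (intro phi_cont) simp
  then obtain s where s: "s > t" "phi s > 0" using exists_right pt by blast
  have s1: "s > 1" using s t by simp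
  have "t^2 < s^2" using s t by (intro power_strict_mono) auto
  hence s2: "s^2 \<ge> 2" using t by simp
  have ph: "Pf s 3 * Zf s (q2+1) \<le> real r2 * Pf s 2 * Zf s q2" using s(2) unfolding phi_def by simp
  obtain k1 where k1: "eigenvalue (adj_matrix (tree_F_verts r1 r2 h q1 q2) (tree_F_edges r1 r2 h q1 q2)) k1"
    "s + 1/s \<le> k1"
    using T_lower[OF assms(3,4,5) s1 s2 ph] by blast
  have lt: "t + 1/t < s + 1/s"
  proof -
    have "1 * t < s * t" by (rule mult_strict_right_mono[OF s1]) (use t in simp)
    hence st: "s * t > 1" using t(1) by linarith
    have "1/t - 1/s = (s - t) / (s * t)" using s t by (simp add: field_simps)
    also have "\<dots> < s - t" using st s(1) by (simp add: divide_less_eq)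
    finally show ?thesis by simp
  qed
  define A1 where "A1 = adj_matrix (tree_F_verts r1 r2 h q1 q2) (tree_F_edges r1 r2 h q1 q2)"
  define A2 where "A2 = adj_matrix (star_T_verts r2 j) (star_T_edges r2 j)"
  have fin1: "finite {k. eigenvalue A1 k}"
    using card_finite_spectrum(1)[OF adj_carrier] unfolding A1_def spectrum_def .
  have fin2: "finite {k. eigenvalue A2 k}"
    using card_finite_spectrum(1)[OF adj_carrier] unfolding A2_def spectrum_def .
  have "k1 \<le> Max {k. eigenvalue A1 k}" using fin1 k1(1) unfolding A1_def by (intro Max_ge) auto
  hence R1: "s + 1/s \<le> rho (tree_F_verts r1 r2 h q1 q2) (tree_F_edges r1 r2 h q1 q2)"
    using k1(2) unfolding rho_def A1_def by simp
  have ne: "{k. eigenvalue A2 k} \<noteq> {}" using star_nonempty[of r2 j] assms(1,2) unfolding A2_def by auto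
  have "Max {k. eigenvalue A2 k} \<in> {k. eigenvalue A2 k}" using Max_in[OF fin2 ne] .
  hence "eigenvalue A2 (Max {k. eigenvalue A2 k})" by simp
  hence "Max {k. eigenvalue A2 k} \<le> t + 1/t" using Tj_upper[OF t(1), of r2 j] t(3) unfolding A2_def by simp
  hence R2: "rho (star_T_verts r2 j) (star_T_edges r2 j) \<le> t + 1/t" unfolding rho_def A2_def .
  show ?thesis using R1 R2 lt by linarith
qed


end
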